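(* Let $L$ be a finite-dimensional solvable Lie algebra over an arbitrary field $F$ and let $U$ be a non-zero core-free semi-modular subalgebra of $L$. Then $\dim U=1$ and $L$ is almost abelian.
   Context: For subalgebras $U,B$ of a Lie algebra $L$, $\langle U,B\rangle$ denotes the subalgebra generated by $U\cup B$. A subalgebra $B$ covers a subalgebra $A$ if $A$ is a maximal subalgebra of $B$. $U$ is upper modular (um) in $L$ if whenever $B$ is a subalgebra of $L$ which covers $U\cap B$, then $\langle U,B\rangle$ covers $U$; $U$ is lower modular (lm) in $L$ if whenever $B$ is a subalgebra of $L$ such that $\langle U,B\rangle$ covers $U$, then $B$ covers $U\cap B$; $U$ is semi-modular (sm) in $L$ if it is both um and lm in $L$. The core $U_L$ of $U$ is the largest ideal of $L$ contained in $U$; $U$ is core-free if $U_L=0$. $L$ is almost abelian if $L=L^2\oplus Fx$ for some $x$, where $L^2=[L,L]$ is abelian and $\mathrm{ad}\,x$ acts as the identity map on $L^2$. *)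

theory Defs
  imports Main "HOL.Vector_Spaces"
begin

text \<open>A Lie algebra over a field 'f is modelled on the whole type 'v, with scalar
  multiplication scale and Lie bracket br.\<close>

definition lie_algebra :: "('f::field \<Rightarrow> 'v::ab_group_add \<Rightarrow> 'v) \<Rightarrow> ('v \<Rightarrow> 'v \<Rightarrow> 'v) \<Rightarrow> bool" where
  "lie_algebra scale br \<longleftrightarrow> vector_space scale \<and>
     (\<forall>x y z. br (x + y) z = br x z + br y z) \<and>
     (\<forall>x y z. br x (y + z) = br x y + br x z) \<and>
     (\<forall>c x y. br (scale c x) y = scale c (br x y)) \<and>
     (\<forall>c x y. br x (scale c y) = scale c (br x y)) \<and>
     (\<forall>x. br x x = 0) \<and>
     (\<forall>x y z. br x (br y z) + br y (br z x) + br z (br x y) = 0)"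

definition fin_dim :: "('f::field \<Rightarrow> 'v::ab_group_add \<Rightarrow> 'v) \<Rightarrow> bool" where
  "fin_dim scale \<longleftrightarrow> (\<exists>B. finite B \<and> module.span scale B = UNIV)"

definition lie_subalgebra :: "('f::field \<Rightarrow> 'v::ab_group_add \<Rightarrow> 'v) \<Rightarrow> ('v \<Rightarrow> 'v \<Rightarrow> 'v) \<Rightarrow> 'v set \<Rightarrow> bool" where
  "lie_subalgebra scale br S \<longleftrightarrow> module.subspace scale S \<and> (\<forall>x\<in>S. \<forall>y\<in>S. br x y \<in> S)"

definition lie_ideal :: "('f::field \<Rightarrow> 'v::ab_group_add \<Rightarrow> 'v) \<Rightarrow> ('v \<Rightarrow> 'v \<Rightarrow> 'v) \<Rightarrow> 'v set \<Rightarrow> bool" where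
  "lie_ideal scale br I \<longleftrightarrow> module.subspace scale I \<and> (\<forall>x. \<forall>y\<in>I. br x y \<in> I)"

definition gen_sub :: "('f::field \<Rightarrow> 'v::ab_group_add \<Rightarrow> 'v) \<Rightarrow> ('v \<Rightarrow> 'v \<Rightarrow> 'v) \<Rightarrow> 'v set \<Rightarrow> 'v set" where
  "gen_sub scale br X = \<Inter>{S. lie_subalgebra scale br S \<and> X \<subseteq> S}"

definition covers :: "('f::field \<Rightarrow> 'v::ab_group_add \<Rightarrow> 'v) \<Rightarrow> ('v \<Rightarrow> 'v \<Rightarrow> 'v) \<Rightarrow> 'v set \<Rightarrow> 'v set \<Rightarrow> bool" where
  "covers scale br B A \<longleftrightarrow> lie_subalgebra scale br B \<and> lie_subalgebra scale br A \<and> A \<subset> B \<and>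
     (\<forall>C. lie_subalgebra scale br C \<and> A \<subseteq> C \<and> C \<subseteq> B \<longrightarrow> C = A \<or> C = B)"

definition upper_modular :: "('f::field \<Rightarrow> 'v::ab_group_add \<Rightarrow> 'v) \<Rightarrow> ('v \<Rightarrow> 'v \<Rightarrow> 'v) \<Rightarrow> 'v set \<Rightarrow> bool" where
  "upper_modular scale br U \<longleftrightarrow> (\<forall>B. lie_subalgebra scale br B \<and> covers scale br B (U \<inter> B)
      \<longrightarrow> covers scale br (gen_sub scale br (U \<union> B)) U)"

definition lower_modular :: "('f::field \<Rightarrow> 'v::ab_group_add \<Rightarrow> 'v) \<Rightarrow> ('v \<Rightarrow> 'v \<Rightarrow> 'v) \<Rightarrow> 'v set \<Rightarrow> bool" where
  "lower_modular scale br U \<longleftrightarrow> (\<forall>B. lie_subalgebra scale br B \<and> covers scale br (gen_sub scale br (U \<union> B)) U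
      \<longrightarrow> covers scale br B (U \<inter> B))"

definition semi_modular :: "('f::field \<Rightarrow> 'v::ab_group_add \<Rightarrow> 'v) \<Rightarrow> ('v \<Rightarrow> 'v \<Rightarrow> 'v) \<Rightarrow> 'v set \<Rightarrow> bool" where
  "semi_modular scale br U \<longleftrightarrow> upper_modular scale br U \<and> lower_modular scale br U"

text \<open>Core-free: the largest ideal contained in U is 0, i.e. every ideal inside U is 0.\<close>
definition core_free :: "('f::field \<Rightarrow> 'v::ab_group_add \<Rightarrow> 'v) \<Rightarrow> ('v \<Rightarrow> 'v \<Rightarrow> 'v) \<Rightarrow> 'v set \<Rightarrow> bool" where
  "core_free scale br U \<longleftrightarrow> (\<forall>I. lie_ideal scale br I \<and> I \<subseteq> U \<longrightarrow> I = {0})"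

definition derived :: "('f::field \<Rightarrow> 'v::ab_group_add \<Rightarrow> 'v) \<Rightarrow> ('v \<Rightarrow> 'v \<Rightarrow> 'v) \<Rightarrow> 'v set \<Rightarrow> 'v set" where
  "derived scale br S = module.span scale {br x y | x y. x \<in> S \<and> y \<in> S}"

fun derived_series :: "('f::field \<Rightarrow> 'v::ab_group_add \<Rightarrow> 'v) \<Rightarrow> ('v \<Rightarrow> 'v \<Rightarrow> 'v) \<Rightarrow> nat \<Rightarrow> 'v set" where
  "derived_series scale br 0 = UNIV"
| "derived_series scale br (Suc n) = derived scale br (derived_series scale br n)"

definition solvable_lie :: "('f::field \<Rightarrow> 'v::ab_group_add \<Rightarrow> 'v) \<Rightarrow> ('v \<Rightarrow> 'v \<Rightarrow> 'v) \<Rightarrow> bool" where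
  "solvable_lie scale br \<longleftrightarrow> (\<exists>n. derived_series scale br n = {0})"

definition almost_abelian :: "('f::field \<Rightarrow> 'v::ab_group_add \<Rightarrow> 'v) \<Rightarrow> ('v \<Rightarrow> 'v \<Rightarrow> 'v) \<Rightarrow> bool" where
  "almost_abelian scale br \<longleftrightarrow> (\<exists>x. let L2 = derived scale br UNIV in
      (\<forall>v. \<exists>a\<in>L2. \<exists>c. v = a + scale c x) \<and>
      L2 \<inter> module.span scale {x} = {0} \<and>
      (\<forall>a\<in>L2. \<forall>b\<in>L2. br a b = 0) \<and>
      (\<forall>a\<in>L2. br x a = a))"

end

theory Submission
  imports Defs
begin

locale lie_alg = vector_space scale
  for scale :: "'f::field \<Rightarrow> 'v::ab_group_add \<Rightarrow> 'v" +
  fixes br :: "'v \<Rightarrow> 'v \<Rightarrow> 'v"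
  assumes addL: "br (x + y) z = br x z + br y z"
    and addR: "br x (y + z) = br x y + br x z"
    and scL: "br (scale c x) y = scale c (br x y)"
    and scR: "br x (scale c y) = scale c (br x y)"
    and alt: "br x x = 0"
    and jac: "br x (br y z) + br y (br z x) + br z (br x y) = 0"
begin

lemma zeroL[simp]: "br 0 y = 0"
  using addL[of 0 0 y] by simp
lemma zeroR[simp]: "br x 0 = 0"
  using addR[of x 0 0] by simp
lemma negL: "br (- x) y = - br x y"
proof -
  have "br x y + br (-x) y = 0" using addL[of x "-x" y] by simp
  then show ?thesis by (metis minus_unique)
qed
lemma negR: "br x (- y) = - br x y"
proof -
  have "br x y + br x (-y) = 0" using addR[of x y "-y"] by simp
  then show ?thesis by (metis minus_unique)
qed
lemma diffL: "br (x - y) z = br x z - br y z"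
  using addL[of x "-y" z] negL by simp
lemma diffR: "br x (y - z) = br x y - br x z"
  using addR[of x y "-z"] negR by simp
lemma anti: "br x y = - br y x"
proof -
  have "br (x+y) (x+y) = br x y + br y x"
    by (simp only: addL addR alt[of x] alt[of y] add_0_left add_0_right) (rule add.commute)
  then have "br y x + br x y = 0" by (metis add.commute alt)
  then show ?thesis by (metis minus_unique)
qed
lemma leib: "br x (br a b) = br (br x a) b + br a (br x b)"
proof -
  have J: "br x (br a b) + br a (br b x) + br b (br x a) = 0" by (rule jac)
  have A: "br a (br b x) = - br a (br x b)" using anti[of b x] negR by simp
  have B: "br b (br x a) = - br (br x a) b" by (rule anti)
  have "(br a (br b x) + br b (br x a)) + br x (br a b) = 0" using J by (metis add.commute add.assoc)
  then have "br x (br a b) = - (br a (br b x) + br b (br x a))" by (metis minus_unique)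
  also have "\<dots> = br (br x a) b + br a (br x b)" unfolding A B by (simp add: add.commute)
  finally show ?thesis .
qed

lemma ds_ideal: "lie_ideal scale br (derived_series scale br n)"
proof (induction n)
  case 0 then show ?case by (simp add: lie_ideal_def)
next
  case (Suc n)
  let ?S = "derived_series scale br n"
  let ?G = "{br x y | x y. x \<in> ?S \<and> y \<in> ?S}"
  have *: "span ?G \<subseteq> {y. br x y \<in> span ?G}" for x
  proof (rule span_minimal)
    show "?G \<subseteq> {y. br x y \<in> span ?G}"
    proof
      fix y assume "y \<in> ?G"
      then obtain a b where y: "y = br a b" "a \<in> ?S" "b \<in> ?S" by blast
      have "br x a \<in> ?S" "br x b \<in> ?S" using Suc y unfolding lie_ideal_def by auto
      then have "br (br x a) b \<in> ?G" "br a (br x b) \<in> ?G" using y by blast+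
      moreover have "br x y = br (br x a) b + br a (br x b)" unfolding y(1) by (rule leib)
      ultimately show "y \<in> {y. br x y \<in> span ?G}" by (simp add: span_add span_base)
    qed
    show "subspace {y. br x y \<in> span ?G}"
      unfolding subspace_def by (auto simp: addR scR span_add span_scale span_zero)
  qed
  show ?case unfolding lie_ideal_def derived_series.simps derived_def
  proof (intro conjI allI ballI)
    show "subspace (span ?G)" by (rule subspace_span)
    fix x y assume "y \<in> span ?G"
    then have "y \<in> {y. br x y \<in> span ?G}" by (rule subsetD[OF *])
    then show "br x y \<in> span ?G" by (rule CollectD)
  qed
qed

lemma ds_br: "a \<in> derived_series scale br n \<Longrightarrow> b \<in> derived_series scale br n
   \<Longrightarrow> br a b \<in> derived_series scale br (Suc n)"
  by (auto simp: derived_def intro!: span_base)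

lemma ideal_sub: "lie_ideal scale br I \<Longrightarrow> subspace I"
  by (simp add: lie_ideal_def)
lemma ideal_br: "lie_ideal scale br I \<Longrightarrow> y \<in> I \<Longrightarrow> br x y \<in> I"
  by (simp add: lie_ideal_def)
lemma ideal_brL: "lie_ideal scale br I \<Longrightarrow> y \<in> I \<Longrightarrow> br y x \<in> I"
  by (metis anti ideal_br ideal_sub subspace_neg)
lemma sub_sub: "lie_subalgebra scale br I \<Longrightarrow> subspace I"
  by (simp add: lie_subalgebra_def)
lemma sub_br: "lie_subalgebra scale br I \<Longrightarrow> x \<in> I \<Longrightarrow> y \<in> I \<Longrightarrow> br x y \<in> I"
  by (simp add: lie_subalgebra_def)

lemma gen_sub_eq:
  assumes "lie_subalgebra scale br S" "X \<subseteq> S"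
    and "\<And>T. lie_subalgebra scale br T \<Longrightarrow> X \<subseteq> T \<Longrightarrow> S \<subseteq> T"
  shows "gen_sub scale br X = S"
  unfolding gen_sub_def using assms by blast

lemma gen_sub_sup: "X \<subseteq> gen_sub scale br X"
  unfolding gen_sub_def by blast

end

lemma exists_step: "P (0::nat) \<Longrightarrow> \<not> P n \<Longrightarrow> \<exists>i. P i \<and> \<not> P (Suc i)"
  by (induction n) auto

context lie_alg
begin

lemma quasi:
  assumes sol: "derived_series scale br m = {0}"
    and U: "lie_subalgebra scale br U" and sm: "semi_modular scale br U"
    and u: "u \<in> U"
  shows "\<exists>c. br u x - scale c x \<in> U"
proof (cases "x \<in> U")
  case True
  then show ?thesis using U u by (intro exI[of _ 0]) (simp add: sub_br)
next
  case False
  have Us: "subspace U" using U by (rule sub_sub)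
  let ?B = "span {x}"
  have x0: "x \<noteq> 0" using False subspace_0[OF Us] by auto
  have Bsub: "lie_subalgebra scale br ?B"
    unfolding lie_subalgebra_def
  proof (intro conjI ballI)
    show "subspace ?B" by simp
    fix a b assume "a \<in> ?B" "b \<in> ?B"
    then obtain s t where "a = scale s x" "b = scale t x" by (auto simp: span_singleton)
    then have "br a b = 0" by (simp add: scL scR alt)
    then show "br a b \<in> ?B" by (simp add: span_zero)
  qed
  have UB: "U \<inter> ?B = {0}"
  proof
    show "U \<inter> ?B \<subseteq> {0}"
    proof
      fix y assume y: "y \<in> U \<inter> ?B"
      then obtain s where s: "y = scale s x" by (auto simp: span_singleton)
      show "y \<in> {0}"
      proof (cases "s = 0")
        case True then show ?thesis using s by simp
      next
        case False
        have "scale (inverse s) y \<in> U" using y Us subspace_scale by blast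
        then have "x \<in> U" using s False by simp
        then show ?thesis using \<open>x \<notin> U\<close> by simp
      qed
    qed
    show "{0} \<subseteq> U \<inter> ?B" using subspace_0[OF Us] span_zero by auto
  qed
  have zsub: "lie_subalgebra scale br {0}"
    unfolding lie_subalgebra_def by simp
  have covB: "covers scale br ?B (U \<inter> ?B)"
    unfolding covers_def UB
  proof (intro conjI allI impI)
    show "lie_subalgebra scale br ?B" by (rule Bsub)
    show "lie_subalgebra scale br {0}" by (rule zsub)
    show "{0} \<subset> ?B" using x0 span_zero span_base[of x "{x}"] by auto
    fix C assume C: "lie_subalgebra scale br C \<and> {0} \<subseteq> C \<and> C \<subseteq> ?B"
    show "C = {0} \<or> C = ?B"
    proof (cases "C = {0}")
      case True then show ?thesis by simp
    next
      case False
      then obtain y where y: "y \<in> C" "y \<noteq> 0" using C by auto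
      then obtain s where s: "y = scale s x" using C by (auto simp: span_singleton)
      have s0: "s \<noteq> 0" using s y by auto
      have "?B \<subseteq> C"
      proof
        fix z assume "z \<in> ?B"
        then obtain t where t: "z = scale t x" by (auto simp: span_singleton)
        have "scale (t / s) y \<in> C" using y C sub_sub subspace_scale by blast
        moreover have "scale (t / s) y = z" using s s0 t by simp
        ultimately show "z \<in> C" by simp
      qed
      then show ?thesis using C by blast
    qed
  qed
  define M where "M = gen_sub scale br (U \<union> ?B)"
  have covM: "covers scale br M U"
    using sm Bsub covB unfolding semi_modular_def upper_modular_def M_def by blast
  have Msub: "lie_subalgebra scale br M" and UM: "U \<subset> M"
    and Mmax: "\<And>C. lie_subalgebra scale br C \<Longrightarrow> U \<subseteq> C \<Longrightarrow> C \<subseteq> M \<Longrightarrow> C = U \<or> C = M"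
    using covM unfolding covers_def by blast+
  have xM: "x \<in> M" using gen_sub_sup[of "U \<union> ?B"] span_base[of x "{x}"] unfolding M_def by blast
  have Ms: "subspace M" using Msub by (rule sub_sub)
  let ?D = "derived_series scale br"
  obtain i where i1: "\<not> (?D i \<inter> M \<subseteq> U)" and i2: "?D (Suc i) \<inter> M \<subseteq> U"
    using exists_step[of "\<lambda>i. \<not> (?D i \<inter> M \<subseteq> U)" m] UM sol subspace_0[OF Us] by auto
  define K where "K = ?D i \<inter> M"
  have Ks: "subspace K" unfolding K_def using ds_ideal ideal_sub Ms subspace_inter by blast
  have KM: "K \<subseteq> M" unfolding K_def by auto
  have MK: "br y k \<in> K" if "y \<in> M" "k \<in> K" for y k
    using that ds_ideal[of i] ideal_br sub_br[OF Msub] unfolding K_def by blast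
  have KK: "br a b \<in> U" if "a \<in> K" "b \<in> K" for a b
    using that ds_br[of a i b] sub_br[OF Msub] i2 unfolding K_def by blast
  have KsubK: "lie_subalgebra scale br K"
    unfolding lie_subalgebra_def using Ks MK KM by blast
  define S where "S = {v + k | v k. v \<in> U \<and> k \<in> K}"
  have Ssub: "lie_subalgebra scale br S"
    unfolding lie_subalgebra_def
  proof (intro conjI ballI)
    show "subspace S" unfolding subspace_def S_def
    proof (intro conjI ballI allI)
      show "0 \<in> {v + k | v k. v \<in> U \<and> k \<in> K}"
        using subspace_0[OF Us] subspace_0[OF Ks] by force
      fix a b assume "a \<in> {v + k | v k. v \<in> U \<and> k \<in> K}" "b \<in> {v + k | v k. v \<in> U \<and> k \<in> K}"
      then obtain v1 k1 v2 k2 where "a = v1 + k1" "b = v2 + k2" "v1 \<in> U" "v2 \<in> U" "k1 \<in> K" "k2 \<in> K" by blast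
      then show "a + b \<in> {v + k | v k. v \<in> U \<and> k \<in> K}"
        by (intro CollectI exI[of _ "v1 + v2"] exI[of _ "k1 + k2"])
           (auto simp: algebra_simps intro: subspace_add[OF Us] subspace_add[OF Ks])
    next
      fix c a assume "a \<in> {v + k | v k. v \<in> U \<and> k \<in> K}"
      then obtain v1 k1 where "a = v1 + k1" "v1 \<in> U" "k1 \<in> K" by blast
      then show "scale c a \<in> {v + k | v k. v \<in> U \<and> k \<in> K}"
        by (intro CollectI exI[of _ "scale c v1"] exI[of _ "scale c k1"])
           (auto simp: algebra_simps intro: subspace_scale[OF Us] subspace_scale[OF Ks])
    qed
    fix a b assume "a \<in> S" "b \<in> S"
    then obtain v1 k1 v2 k2 where ab: "a = v1 + k1" "b = v2 + k2" and h: "v1 \<in> U" "v2 \<in> U" "k1 \<in> K" "k2 \<in> K"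
      unfolding S_def by blast
    have "br a b = (br v1 v2 + br k1 k2) + (br v1 k2 + br k1 v2)"
      unfolding ab by (simp add: addL addR algebra_simps)
    moreover have "br v1 v2 + br k1 k2 \<in> U"
      using h sub_br[OF U] KK subspace_add[OF Us] by blast
    moreover have "br v1 k2 + br k1 v2 \<in> K"
    proof -
      have "v1 \<in> M" "v2 \<in> M" using h UM by auto
      then have "br v1 k2 \<in> K" "br v2 k1 \<in> K" using MK h by auto
      then have "br v1 k2 \<in> K" "br k1 v2 \<in> K" using anti[of k1 v2] subspace_neg[OF Ks] by auto
      then show ?thesis using subspace_add[OF Ks] by blast
    qed
    ultimately show "br a b \<in> S" unfolding S_def by blast
  qed
  have US: "U \<subseteq> S" unfolding S_def using subspace_0[OF Ks] by force
  have KS: "K \<subseteq> S" unfolding S_def using subspace_0[OF Us] by force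
  have SM: "S \<subseteq> M" unfolding S_def using UM KM subspace_add[OF Ms] by blast
  have genS: "gen_sub scale br (U \<union> K) = S"
  proof (rule gen_sub_eq)
    show "lie_subalgebra scale br S" by (rule Ssub)
    show "U \<union> K \<subseteq> S" using US KS by blast
    fix T assume T: "lie_subalgebra scale br T" "U \<union> K \<subseteq> T"
    show "S \<subseteq> T" unfolding S_def using T sub_sub subspace_add by blast
  qed
  obtain k where kK: "k \<in> K" and kU: "k \<notin> U" using i1 unfolding K_def by blast
  have "S \<noteq> U" using kK kU KS by blast
  then have SeqM: "S = M" using Mmax[OF Ssub US SM] by blast
  have covK: "covers scale br K (U \<inter> K)"
    using sm KsubK covM genS SeqM unfolding semi_modular_def lower_modular_def by metis
  have UKs: "subspace (U \<inter> K)" using Us Ks by (rule subspace_inter)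
  have kM: "k \<in> M" using kK KM by blast
  define C where "C = {w + scale c k | w c. w \<in> U \<inter> K}"
  have Csub: "lie_subalgebra scale br C"
    unfolding lie_subalgebra_def
  proof (intro conjI ballI)
    show "subspace C" unfolding subspace_def C_def
    proof (intro conjI ballI allI)
      show "0 \<in> {w + scale c k | w c. w \<in> U \<inter> K}"
        using subspace_0[OF UKs] by (intro CollectI exI[of _ 0] exI[of _ "0::'f"]) simp
      fix a b assume "a \<in> {w + scale c k | w c. w \<in> U \<inter> K}" "b \<in> {w + scale c k | w c. w \<in> U \<inter> K}"
      then obtain w1 c1 w2 c2 where "a = w1 + scale c1 k" "b = w2 + scale c2 k" "w1 \<in> U \<inter> K" "w2 \<in> U \<inter> K" by blast
      then show "a + b \<in> {w + scale c k | w c. w \<in> U \<inter> K}"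
        by (intro CollectI exI[of _ "w1 + w2"] exI[of _ "c1 + c2"])
           (auto simp: algebra_simps intro: subspace_add[OF Us] subspace_add[OF Ks])
    next
      fix d a assume "a \<in> {w + scale c k | w c. w \<in> U \<inter> K}"
      then obtain w1 c1 where "a = w1 + scale c1 k" "w1 \<in> U \<inter> K" by blast
      then show "scale d a \<in> {w + scale c k | w c. w \<in> U \<inter> K}"
        by (intro CollectI exI[of _ "scale d w1"] exI[of _ "d * c1"])
           (auto simp: algebra_simps intro: subspace_scale[OF Us] subspace_scale[OF Ks])
    qed
    fix a b assume "a \<in> C" "b \<in> C"
    then obtain w1 c1 w2 c2 where ab: "a = w1 + scale c1 k" "b = w2 + scale c2 k"
      and h: "w1 \<in> U \<inter> K" "w2 \<in> U \<inter> K" unfolding C_def by blast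
    have e: "br a b = (br w1 w2 + scale c2 (br w1 k) + scale c1 (br k w2)) + scale 0 k"
      unfolding ab by (simp add: addL addR scL scR alt algebra_simps)
    have "br w1 w2 \<in> U \<inter> K" using h sub_br[OF U] MK KM by blast
    moreover have "br w1 k \<in> U \<inter> K" using h kK KK MK KM by blast
    moreover have "br k w2 \<in> U \<inter> K" using h kK KK MK kM by blast
    ultimately have "br w1 w2 + scale c2 (br w1 k) + scale c1 (br k w2) \<in> U \<inter> K"
      using subspace_add[OF UKs] subspace_scale[OF UKs] by metis
    then show "br a b \<in> C" unfolding C_def e by blast
  qed
  have UKC: "U \<inter> K \<subseteq> C" unfolding C_def by (force intro: exI[of _ "0::'f"])
  have CK: "C \<subseteq> K" unfolding C_def using kK subspace_add[OF Ks] subspace_scale[OF Ks] by blast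
  have kC: "k \<in> C" unfolding C_def using subspace_0[OF UKs]
    by (intro CollectI exI[of _ 0] exI[of _ "1::'f"]) simp
  have "C = K" using covK Csub UKC CK kC kU unfolding covers_def by blast
  have Mform: "\<exists>v\<in>U. \<exists>c. y = v + scale c k" if "y \<in> M" for y
  proof -
    from that SeqM obtain v k' where y: "y = v + k'" "v \<in> U" "k' \<in> K" unfolding S_def by blast
    with \<open>C = K\<close> obtain w c where "k' = w + scale c k" "w \<in> U \<inter> K" unfolding C_def by blast
    then have "y = (v + w) + scale c k" "v + w \<in> U" using y subspace_add[OF Us] by (auto simp: algebra_simps)
    then show ?thesis by blast
  qed
  obtain v1 c1 where x1: "x = v1 + scale c1 k" "v1 \<in> U" using Mform xM by blast
  have c10: "c1 \<noteq> 0" using x1 False by auto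
  have "u \<in> M" using u UM by blast
  then have "br u x \<in> M" using xM sub_br[OF Msub] by blast
  then obtain v2 c2 where x2: "br u x = v2 + scale c2 k" "v2 \<in> U" using Mform by blast
  have "scale (c2 / c1) x = scale (c2 / c1) v1 + scale c2 k"
    using x1 c10 by (simp add: scale_right_distrib)
  then have "br u x - scale (c2 / c1) x = v2 - scale (c2 / c1) v1"
    using x2 by simp
  moreover have "v2 - scale (c2 / c1) v1 \<in> U"
    using x1 x2 subspace_diff[OF Us] subspace_scale[OF Us] by blast
  ultimately show ?thesis by metis
qed

lemma aa:
  assumes u10: "u1 \<noteq> 0" and hq: "\<forall>y. br u1 y - y \<in> span {u1}"
    and m: "derived_series scale br m = {0}"
  shows "almost_abelian scale br"
proof -
  define V where "V = {y. br u1 y = y}"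
  have uu: "br u1 u1 = 0" by (rule alt)
  have hq': "\<exists>t. br u1 y = y + scale t u1" for y
  proof -
    obtain t where "br u1 y - y = scale t u1" using hq by (auto simp: span_singleton)
    then have "br u1 y = y + scale t u1" by (metis add.commute diff_add_cancel)
    then show ?thesis by blast
  qed
  have h1: "br u1 y \<in> V" for y
  proof -
    obtain t where t: "br u1 y = y + scale t u1" using hq' by blast
    have "br u1 (br u1 y) = br u1 (y + scale t u1)" using t by simp
    also have "\<dots> = br u1 y" by (simp add: addR scR uu)
    finally show ?thesis unfolding V_def by simp
  qed
  have h2: "\<exists>v\<in>V. \<exists>s. y = v + scale s u1" for y
  proof -
    obtain t where t: "br u1 y = y + scale t u1" using hq' by blast
    have "y = br u1 y + scale (- t) u1" using t by simp
    then show ?thesis using h1 by blast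
  qed
  have Vs: "subspace V" unfolding subspace_def V_def by (simp add: addR scR)
  have h3: "V \<inter> span {u1} = {0}"
  proof
    show "V \<inter> span {u1} \<subseteq> {0}"
    proof
      fix a assume a: "a \<in> V \<inter> span {u1}"
      then obtain t where t: "a = scale t u1" by (auto simp: span_singleton)
      have "br u1 a = 0" unfolding t by (simp add: scR uu)
      then show "a \<in> {0}" using a unfolding V_def by simp
    qed
    show "{0} \<subseteq> V \<inter> span {u1}" using subspace_0[OF Vs] span_zero by auto
  qed
  have h4: "\<exists>t. br a b = scale t u1" if "a \<in> V" "b \<in> V" for a b
  proof -
    have "br u1 (br a b) = br (br u1 a) b + br a (br u1 b)" by (rule leib)
    then have e1: "br u1 (br a b) = br a b + br a b" using that unfolding V_def by simp
    obtain t where "br u1 (br a b) = br a b + scale t u1" using hq' by blast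
    then have "br a b = scale t u1" using e1 by simp
    then show ?thesis by blast
  qed
  let ?L2 = "derived scale br UNIV"
  have bL: "br x y \<in> ?L2" for x y unfolding derived_def by (rule span_base) blast
  have L2s: "subspace ?L2" unfolding derived_def by (rule subspace_span)
  have h5: "br a b = 0" if ab: "a \<in> V" "b \<in> V" for a b
  proof (rule ccontr)
    assume ne: "br a b \<noteq> 0"
    obtain t where t: "br a b = scale t u1" using h4 ab by blast
    have t0: "t \<noteq> 0" using t ne by auto
    have "scale (inverse t) (br a b) \<in> ?L2" using bL subspace_scale[OF L2s] by blast
    then have u1L: "u1 \<in> ?L2" using t t0 by simp
    have "y \<in> ?L2" for y
    proof -
      obtain v s where "v \<in> V" "y = v + scale s u1" using h2 by blast
      then have "y = br u1 v + scale s u1" unfolding V_def by simp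
      then show ?thesis using bL u1L subspace_add[OF L2s] subspace_scale[OF L2s] by metis
    qed
    then have L2U: "?L2 = UNIV" by blast
    have "derived_series scale br n = UNIV" for n
      by (induction n) (simp_all add: L2U)
    then show False using m u10 by blast
  qed
  have brV: "br y z \<in> V" for y z
  proof -
    obtain v1 s1 where y: "v1 \<in> V" "y = v1 + scale s1 u1" using h2 by blast
    obtain v2 s2 where z: "v2 \<in> V" "z = v2 + scale s2 u1" using h2 by blast
    have a1: "br v1 u1 = - v1" using anti[of v1 u1] y(1) unfolding V_def by simp
    have a2: "br u1 v2 = v2" using z(1) unfolding V_def by simp
    have a3: "br v1 v2 = 0" using h5 y(1) z(1) by blast
    have "br y z = scale s1 v2 - scale s2 v1"
      unfolding y(2) z(2) by (simp add: addL addR scL scR uu a1 a2 a3 algebra_simps)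
    then show ?thesis using y(1) z(1) subspace_diff[OF Vs] subspace_scale[OF Vs] by metis
  qed
  have L2eq: "?L2 = V"
  proof
    show "?L2 \<subseteq> V" unfolding derived_def using brV Vs by (intro span_minimal) auto
    show "V \<subseteq> ?L2"
    proof
      fix v assume "v \<in> V"
      then have "v = br u1 v" unfolding V_def by simp
      then show "v \<in> ?L2" using bL by metis
    qed
  qed
  show ?thesis unfolding almost_abelian_def Let_def L2eq
  proof (intro exI[of _ u1] conjI allI ballI)
    fix v show "\<exists>a\<in>V. \<exists>c. v = a + scale c u1" using h2 by blast
  next
    show "V \<inter> span {u1} = {0}" by (rule h3)
  next
    fix a b assume "a \<in> V" "b \<in> V" then show "br a b = 0" by (rule h5)
  next
    fix a assume "a \<in> V" then show "br u1 a = a" unfolding V_def by simp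
  qed
qed

lemma main:
  assumes sol: "solvable_lie scale br" and U: "lie_subalgebra scale br U" and ne: "U \<noteq> {0}"
    and cf: "core_free scale br U" and sm: "semi_modular scale br U"
  shows "dim U = 1 \<and> almost_abelian scale br"
proof -
  obtain m where m: "derived_series scale br m = {0}" using sol unfolding solvable_lie_def by blast
  have Us: "subspace U" using U by (rule sub_sub)
  have Q: "\<exists>c. br u y - scale c y \<in> U" if "u \<in> U" for u y using quasi[OF m U sm that] .
  have cfI: "I = {0}" if "lie_ideal scale br I" "I \<subseteq> U" for I using cf that unfolding core_free_def by blast
  have UnU: "U \<noteq> UNIV"
  proof
    assume "U = UNIV"
    then have "lie_ideal scale br U" using U unfolding lie_ideal_def lie_subalgebra_def by auto
    then show False using cfI ne by blast
  qed
  let ?D = "derived_series scale br"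
  obtain i where i1: "\<not> ?D i \<subseteq> U" and i2: "?D (Suc i) \<subseteq> U"
    using exists_step[of "\<lambda>i. \<not> ?D i \<subseteq> U" m] UnU m subspace_0[OF Us] by auto
  define N where "N = ?D i"
  have Nid: "lie_ideal scale br N" unfolding N_def by (rule ds_ideal)
  have Ns: "subspace N" using Nid by (rule ideal_sub)
  have NN: "br a b \<in> U" if "a \<in> N" "b \<in> N" for a b using that ds_br i2 unfolding N_def by blast
  have Wid: "lie_ideal scale br (U \<inter> N)"
    unfolding lie_ideal_def
  proof (intro conjI allI ballI)
    show "subspace (U \<inter> N)" using Us Ns by (rule subspace_inter)
    fix y w assume w: "w \<in> U \<inter> N"
    have "br y w \<in> N" using w Nid ideal_br by blast
    moreover have "br w y \<in> U"
    proof -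
      obtain c where c: "br w y - scale c y \<in> U" using Q w by blast
      show ?thesis
      proof (cases "c = 0")
        case True then show ?thesis using c by simp
      next
        case False
        define n where "n = scale (inverse c) (br w y)"
        define v where "v = - scale (inverse c) (br w y - scale c y)"
        have nN: "n \<in> N" unfolding n_def using Nid ideal_brL[of N w y] w subspace_scale[OF Ns] by blast
        have vU: "v \<in> U" unfolding v_def using c subspace_scale[OF Us] subspace_neg[OF Us] by blast
        have "y = v + n" unfolding v_def n_def using False by (simp add: algebra_simps)
        then have "br w y = br w v + br w n" by (simp add: addR)
        moreover have "br w v \<in> U" using w vU sub_br[OF U] by blast
        moreover have "br w n \<in> U" using w nN NN by blast
        ultimately show ?thesis using subspace_add[OF Us] by simp
      qed
    qed
    then have "br y w \<in> U" using anti[of y w] subspace_neg[OF Us] by simp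
    ultimately show "br y w \<in> U \<inter> N" by blast
  qed
  have W0: "U \<inter> N = {0}" using cfI[OF Wid] by blast
  obtain n0 where n0N: "n0 \<in> N" and n0U: "n0 \<notin> U" using i1 unfolding N_def by blast
  have n00: "n0 \<noteq> 0" using n0U subspace_0[OF Us] by auto
  have eig: "br v n = scale c n" if "v \<in> U" "n \<in> N" "br v n - scale c n \<in> U" for v n c
  proof -
    have "br v n - scale c n \<in> N" using that Nid ideal_br subspace_scale[OF Ns] subspace_diff[OF Ns] by blast
    then have "br v n - scale c n = 0" using that W0 by blast
    then show ?thesis by simp
  qed
  have G: "\<exists>c. br v n0 = scale c n0 \<and> (\<forall>y. br v y - scale c y \<in> U)" if v: "v \<in> U" for v
  proof -
    obtain c where "br v n0 - scale c n0 \<in> U" using Q v by blast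
    then have c: "br v n0 = scale c n0" using eig v n0N by blast
    have "br v y - scale c y \<in> U" for y
    proof -
      have easy: "br v y - scale c y \<in> U" if "y = v' + scale t n0" "v' \<in> U" for v' t
      proof -
        have "br v y - scale c y = br v v' - scale c v'"
          using that c by (simp add: addR scR algebra_simps)
        then show ?thesis using that v sub_br[OF U] subspace_scale[OF Us] subspace_diff[OF Us] by metis
      qed
      obtain d1 where d1: "br v y - scale d1 y \<in> U" using Q v by blast
      obtain d2 where d2: "br v (y + n0) - scale d2 (y + n0) \<in> U" using Q v by blast
      have "(br v y - scale d1 y) - (br v (y + n0) - scale d2 (y + n0)) = scale (d2 - d1) y + scale (d2 - c) n0"
        using c by (simp add: addR algebra_simps)
      moreover have "(br v y - scale d1 y) - (br v (y + n0) - scale d2 (y + n0)) \<in> U"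
        using d1 d2 subspace_diff[OF Us] by blast
      ultimately have e: "scale (d2 - d1) y + scale (d2 - c) n0 \<in> U" by simp
      show ?thesis
      proof (cases "d1 = d2")
        case True
        then have sU: "scale (d2 - c) n0 \<in> U" using e by simp
        have "d2 = c"
        proof (rule ccontr)
          assume "d2 \<noteq> c"
          then have "scale (inverse (d2 - c)) (scale (d2 - c) n0) = n0" by simp
          moreover have "scale (inverse (d2 - c)) (scale (d2 - c) n0) \<in> U" using sU subspace_scale[OF Us] by blast
          ultimately show False using n0U by simp
        qed
        then show ?thesis using d1 True by simp
      next
        case False
        define v' where "v' = scale (inverse (d2 - d1)) (scale (d2 - d1) y + scale (d2 - c) n0)"
        have "v' \<in> U" unfolding v'_def using e subspace_scale[OF Us] by blast
        moreover have "y = v' + scale (- (inverse (d2 - d1) * (d2 - c))) n0"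
          using False unfolding v'_def by (simp add: scale_right_distrib)
        ultimately show ?thesis using easy by blast
      qed
    qed
    then show ?thesis using c by blast
  qed
  define K where "K = {k \<in> U. br k n0 = 0}"
  have Kid: "lie_ideal scale br K"
    unfolding lie_ideal_def
  proof (intro conjI allI ballI)
    show "subspace K" unfolding subspace_def K_def
      using subspace_0[OF Us] subspace_add[OF Us] subspace_scale[OF Us] by (auto simp: addL scL)
    fix y k assume k: "k \<in> K"
    then have kU: "k \<in> U" and kn: "br k n0 = 0" unfolding K_def by auto
    obtain c where c1: "br k n0 = scale c n0" and c2: "\<forall>y. br k y - scale c y \<in> U" using G kU by blast
    have c0: "c = 0" using c1 kn n00 by simp
    have "br k y \<in> U" using c2 c0 by simp
    then have yk: "br y k \<in> U" using anti[of y k] subspace_neg[OF Us] by simp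
    have "br y n0 \<in> N" using n0N Nid ideal_br by blast
    then have "br k (br y n0) = 0" using eig[of k "br y n0" 0] kU c2 c0 by simp
    moreover have "br y (br k n0) = br (br y k) n0 + br k (br y n0)" by (rule leib)
    ultimately have "br (br y k) n0 = 0" using kn by simp
    then show "br y k \<in> K" unfolding K_def using yk by simp
  qed
  have K0: "K = {0}" using cfI[OF Kid] unfolding K_def by blast
  obtain u where uU: "u \<in> U" and u0: "u \<noteq> 0" using ne subspace_0[OF Us] by blast
  obtain c where c: "br u n0 = scale c n0" using G uU by blast
  have cn0: "c \<noteq> 0"
  proof
    assume "c = 0"
    then have "u \<in> K" using c uU unfolding K_def by simp
    then show False using K0 u0 by simp
  qed
  define u1 where "u1 = scale (inverse c) u"
  have u1U: "u1 \<in> U" unfolding u1_def using uU subspace_scale[OF Us] by blast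
  have u1n: "br u1 n0 = n0" unfolding u1_def using c cn0 by (simp add: scL)
  have u10: "u1 \<noteq> 0" using u1n n00 by auto
  have Uspan: "U = span {u1}"
  proof
    show "span {u1} \<subseteq> U" using u1U Us span_minimal by blast
    show "U \<subseteq> span {u1}"
    proof
      fix v assume v: "v \<in> U"
      obtain d where d: "br v n0 = scale d n0" using G v by blast
      have "v - scale d u1 \<in> K" unfolding K_def
        using v u1U d u1n subspace_diff[OF Us] subspace_scale[OF Us] by (simp add: diffL scL)
      then have "v = scale d u1" using K0 by simp
      then show "v \<in> span {u1}" by (metis span_base span_scale insertI1)
    qed
  qed
  have dim1: "dim U = 1"
  proof -
    have "independent {u1}" using u10 independent_empty by (intro independent_insertI) auto
    then show ?thesis using Uspan dim_span_eq_card_independent by simp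
  qed
  obtain c1 where c1a: "br u1 n0 = scale c1 n0" and c1b: "\<forall>y. br u1 y - scale c1 y \<in> U"
    using G u1U by blast
  have "c1 = 1" using c1a u1n n00 by (metis scale_cancel_right scale_one)
  then have hq: "\<forall>y. br u1 y - y \<in> span {u1}" using c1b Uspan by simp
  show ?thesis using dim1 aa[OF u10 hq m] by blast
qed

end

theorem corollary2p4:
  fixes scale :: "'f::field \<Rightarrow> 'v::ab_group_add \<Rightarrow> 'v"
    and br :: "'v \<Rightarrow> 'v \<Rightarrow> 'v"
    and U :: "'v set"
  assumes "lie_algebra scale br"
    and "fin_dim scale"
    and "solvable_lie scale br"
    and "lie_subalgebra scale br U"
    and "U \<noteq> {0}"
    and "core_free scale br U"
    and "semi_modular scale br U"
  shows "vector_space.dim scale U = 1 \<and> almost_abelian scale br"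
proof -
  interpret lie_alg scale br
    using assms(1) unfolding lie_algebra_def lie_alg_def lie_alg_axioms_def by blast
  show ?thesis using main assms(3-7) by blast
qed

end
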